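(* Let $X_1, \dots, X_n$ be independent, identically distributed random variables taking values in $[0, \infty)$, with common distribution function $F$. Suppose that (1) $F$ has a continuous density $f$ in a neighborhood of $0$ which is nonvanishing there (in particular $f(0) \neq 0$), and (2) $1 - F \in L^p([0, \infty))$ for some $p > 0$. Then, as $n \to \infty$, \[ \mathbb{E}\big(\min(X_1, \dots, X_n)\big) \sim \frac{1}{f(0)(n+1)}. \]
   Context: $a_n \sim b_n$ means $a_n / b_n \to 1$ as $n \to \infty$. *)

theory Defs
  imports "HOL-Probability.Probability" "HOL-Library.Landau_Symbols"
begin

end

theory Submission
  imports Defs
begin


lemma layer_cake:
  fixes Y :: "'a \<Rightarrow> real"
  assumes sf: "sigma_finite_measure M" and Ym[measurable]: "Y \<in> borel_measurable M"
    and Y0: "\<And>x. x\<in>space M \<Longrightarrow> Y x \<ge> 0"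
  shows "(\<integral>\<^sup>+x. ennreal (Y x) \<partial>M) = (\<integral>\<^sup>+t. indicator {0..} t * emeasure M {x\<in>space M. t < Y x} \<partial>lborel)"
proof -
  interpret pair_sigma_finite M lborel
    using sf by (simp add: pair_sigma_finite_def lborel.sigma_finite_measure_axioms)
  have "(\<integral>\<^sup>+x. ennreal (Y x) \<partial>M) = (\<integral>\<^sup>+x. (\<integral>\<^sup>+t. (if 0 \<le> t \<and> t < Y x then 1 else 0) \<partial>lborel) \<partial>M)"
  proof (rule nn_integral_cong)
    fix x assume "x \<in> space M"
    have "(\<integral>\<^sup>+t. (if 0 \<le> t \<and> t < Y x then 1 else 0) \<partial>lborel) = (\<integral>\<^sup>+t. indicator {0..<Y x} t \<partial>lborel)"
      by (intro nn_integral_cong) (auto simp: indicator_def)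
    also have "\<dots> = ennreal (Y x)" using Y0[OF \<open>x \<in> space M\<close>] by simp
    finally show "ennreal (Y x) = (\<integral>\<^sup>+t. (if 0 \<le> t \<and> t < Y x then 1 else 0) \<partial>lborel)" by simp
  qed
  also have "\<dots> = (\<integral>\<^sup>+t. (\<integral>\<^sup>+x. (if 0 \<le> t \<and> t < Y x then 1 else 0) \<partial>M) \<partial>lborel)"
    by (rule Fubini'[symmetric]) measurable
  also have "\<dots> = (\<integral>\<^sup>+t. indicator {0..} t * emeasure M {x\<in>space M. t < Y x} \<partial>lborel)"
  proof (rule nn_integral_cong)
    fix t :: real
    have "(\<integral>\<^sup>+x. (if 0 \<le> t \<and> t < Y x then 1 else 0) \<partial>M) = (\<integral>\<^sup>+x. indicator {0..} t * indicator {x\<in>space M. t < Y x} x \<partial>M)"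
      by (intro nn_integral_cong) (auto simp: indicator_def)
    also have "\<dots> = indicator {0..} t * emeasure M {x\<in>space M. t < Y x}"
      by (rule nn_integral_cmult_indicator) measurable
    finally show "(\<integral>\<^sup>+x. (if 0 \<le> t \<and> t < Y x then 1 else 0) \<partial>M) = indicator {0..} t * emeasure M {x\<in>space M. t < Y x}" .
  qed
  finally show ?thesis .
qed



lemma poly_FTC:
  fixes c \<eta> :: real and n :: nat
  assumes "c > 0" "\<eta> \<ge> 0" "c * \<eta> \<le> 1"
  shows "(\<integral>\<^sup>+t. ennreal ((1 - c*t)^n) * indicator {0..\<eta>} t \<partial>lborel)
           = ennreal ((1 - (1 - c*\<eta>)^(n+1)) / (c * (real n + 1)))"
proof -
  define K where "K = c * (real n + 1)"
  have K: "K > 0" using assms by (simp add: K_def)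
  let ?P = "\<lambda>t. - ((1 - c*t)^(Suc n)) / K"
  have "(\<integral>\<^sup>+t. ennreal ((1 - c*t)^n) * indicator {0..\<eta>} t \<partial>lborel) = ?P \<eta> - ?P 0"
  proof (rule nn_integral_FTC_Icc)
    show "(\<lambda>t. (1 - c*t)^n) \<in> borel_measurable borel" by measurable
    fix t assume t: "t \<in> {0..\<eta>}"
    have "DERIV (\<lambda>t. (1 - c*t)^(Suc n)) t :> real (Suc n) * (1 - c*t)^n * (- c)"
      apply (auto intro!: derivative_eq_intros)
      apply (cases n) apply (auto simp: algebra_simps)
      done
    then have "DERIV ?P t :> - (real (Suc n) * (1 - c*t)^n * (- c)) / K"
      using K by (intro derivative_eq_intros) auto
    moreover have "- (real (Suc n) * (1 - c*t)^n * (- c)) / K = (1 - c*t)^n"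
      using K by (simp add: K_def field_simps)
    ultimately show "DERIV ?P t :> (1 - c*t)^n" by simp
    have "c * t \<le> c * \<eta>" using t assms by (intro mult_left_mono) auto
    then show "0 \<le> (1 - c*t)^n" using assms by (intro zero_le_power) linarith
  qed (use assms in auto)
  also have "?P \<eta> - ?P 0 = (1 - (1 - c*\<eta>)^(n+1)) / (c * (real n + 1))"
    using K by (simp add: K_def field_simps)
  finally show ?thesis .
qed

lemma tail_pointwise:
  fixes g q p :: real and n N :: nat
  assumes "0 \<le> g" "g \<le> 1" "g \<le> q" "p > 0" "N = nat \<lceil>p\<rceil>" "n \<ge> N"
  shows "g ^ n \<le> q ^ (n - N) * g powr p"
proof -
  have N1: "N \<ge> 1" using assms by linarith
  have "g ^ n = g ^ (n - N) * g ^ N" using assms by (simp flip: power_add)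
  also have "\<dots> \<le> q ^ (n - N) * g powr p"
  proof (rule mult_mono)
    show "g ^ (n - N) \<le> q ^ (n - N)" using assms by (intro power_mono) auto
    show "g ^ N \<le> g powr p"
    proof (cases "g = 0")
      case True then show ?thesis using N1 by (simp add: power_0_left)
    next
      case False
      have "0 < g" using False assms(1) by simp
      then have "g ^ N = g powr (real N)" by (simp add: powr_realpow)
      also have "\<dots> \<le> g powr p" using assms real_nat_ceiling_ge[of p]
        by (intro powr_mono') auto
      finally show ?thesis .
    qed
    show "0 \<le> q ^ (n - N)" using assms by simp
    show "0 \<le> g ^ N" using assms by simp
  qed
  finally show ?thesis .
qed

lemma bounds:
  fixes G :: "real \<Rightarrow> real"
  assumes Gm[measurable]: "G \<in> borel_measurable borel"
    and G0: "\<And>t. 0 \<le> G t" and G1: "\<And>t. G t \<le> 1" and Gmono: "\<And>s t. s \<le> t \<Longrightarrow> G t \<le> G s"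
    and p: "p > 0" and Lp: "(\<lambda>t. G t powr p) integrable_on {0..}"
    and a: "0 < a" "a \<le> b" and eta: "\<eta> > 0" "b * \<eta> \<le> 1"
    and Gb: "\<And>t. 0 \<le> t \<Longrightarrow> t \<le> \<eta> \<Longrightarrow> 1 - b*t \<le> G t \<and> G t \<le> 1 - a*t"
  obtains C where "C \<ge> 0" "\<And>n. n \<ge> nat \<lceil>p\<rceil> \<Longrightarrow>
      (1 - (1-b*\<eta>)^(n+1))/(b*(real n+1)) \<le> enn2real (\<integral>\<^sup>+t. indicator {0..} t * ennreal (G t ^ n) \<partial>lborel)
      \<and> enn2real (\<integral>\<^sup>+t. indicator {0..} t * ennreal (G t ^ n) \<partial>lborel) \<le> 1/(a*(real n+1)) + G \<eta> ^ (n - nat \<lceil>p\<rceil>) * C"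
proof -
  define N where "N = nat \<lceil>p\<rceil>"
  define q where "q = G \<eta>"
  define C where "C = integral {0..} (\<lambda>t. G t powr p)"
  have C0: "C \<ge> 0" unfolding C_def by (rule integral_nonneg[OF Lp]) simp
  have nnC: "(\<integral>\<^sup>+t. ennreal (G t powr p) * indicator {0..} t \<partial>lborel) = ennreal C"
    unfolding C_def by (rule nn_integral_has_integral_lebesgue') (use Lp in auto)
  have b: "b > 0" using a by simp
  have "(1 - (1-b*\<eta>)^(n+1))/(b*(real n+1)) \<le> enn2real (\<integral>\<^sup>+t. indicator {0..} t * ennreal (G t ^ n) \<partial>lborel)
      \<and> enn2real (\<integral>\<^sup>+t. indicator {0..} t * ennreal (G t ^ n) \<partial>lborel) \<le> 1/(a*(real n+1)) + q ^ (n - N) * C"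
    if n: "n \<ge> N" for n
  proof -
    define I where "I = (\<integral>\<^sup>+t. indicator {0..} t * ennreal (G t ^ n) \<partial>lborel)"
    define L where "L = (1 - (1-b*\<eta>)^(n+1))/(b*(real n+1))"
    define Ua where "Ua = (1 - (1-a*\<eta>)^(n+1))/(a*(real n+1))"
    have ae: "a * \<eta> \<le> 1" using a eta by (meson dual_order.trans less_imp_le mult_right_mono)
    have "(1-b*\<eta>)^(n+1) \<le> 1" by (rule power_le_one) (use b eta in auto)
    then have L0: "L \<ge> 0" unfolding L_def using b eta
      by (intro divide_nonneg_pos) auto
    have "(1-a*\<eta>)^(n+1) \<le> 1" by (rule power_le_one) (use a ae eta in auto)
    then have Ua0: "Ua \<ge> 0" unfolding Ua_def using a by (intro divide_nonneg_pos) auto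
    have Ua: "Ua \<le> 1/(a*(real n+1))" unfolding Ua_def using a ae eta
      by (intro divide_right_mono) (auto simp: add_pos_nonneg)
    have "ennreal L = (\<integral>\<^sup>+t. ennreal ((1 - b*t)^n) * indicator {0..\<eta>} t \<partial>lborel)"
      unfolding L_def using b eta by (simp add: poly_FTC)
    also have "\<dots> \<le> I" unfolding I_def
    proof (rule nn_integral_mono)
      fix t :: real
      show "ennreal ((1 - b*t)^n) * indicator {0..\<eta>} t \<le> indicator {0..} t * ennreal (G t ^ n)"
      proof (cases "t \<in> {0..\<eta>}")
        case True
        have "b * t \<le> b * \<eta>" using True b by (intro mult_left_mono) auto
        then have "(1 - b*t)^n \<le> G t ^ n" using Gb[of t] True eta by (intro power_mono) auto
        then show ?thesis using True by (simp add: indicator_def ennreal_leI)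
      qed simp
    qed
    finally have low: "ennreal L \<le> I" .
    have "I \<le> (\<integral>\<^sup>+t. ennreal ((1 - a*t)^n) * indicator {0..\<eta>} t +
                  ennreal (q^(n-N)) * (ennreal (G t powr p) * indicator {0..} t) \<partial>lborel)"
      unfolding I_def
    proof (rule nn_integral_mono)
      fix t :: real
      show "indicator {0..} t * ennreal (G t ^ n) \<le> ennreal ((1 - a*t)^n) * indicator {0..\<eta>} t +
                  ennreal (q^(n-N)) * (ennreal (G t powr p) * indicator {0..} t)"
      proof (cases "t < 0")
        case True then show ?thesis by simp
      next
        case False
        show ?thesis
        proof (cases "t \<le> \<eta>")
          case True
          then have "G t ^ n \<le> (1 - a*t)^n" using Gb[of t] False G0 by (intro power_mono) auto
          then have "ennreal (G t ^ n) \<le> ennreal ((1 - a * t) ^ n)" by (rule ennreal_leI)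
          then show ?thesis using True False by (simp add: indicator_def add_increasing2)
        next
          case f2: False
          have "G t ^ n \<le> q ^ (n - N) * G t powr p" unfolding q_def
            by (rule tail_pointwise) (use G0 G1 Gmono f2 p n N_def in auto)
          then have "ennreal (G t ^ n) \<le> ennreal (q^(n-N)) * ennreal (G t powr p)"
            using G0[of \<eta>] by (simp add: ennreal_mult'[symmetric] ennreal_leI q_def)
          then show ?thesis using False f2 by (simp add: indicator_def add_increasing)
        qed
      qed
    qed
    also have "\<dots> = ennreal Ua + ennreal (q^(n-N)) * ennreal C"
      using a ae eta by (subst nn_integral_add) (auto simp: nn_integral_cmult nnC poly_FTC Ua_def)
    also have "\<dots> = ennreal (Ua + q^(n-N) * C)"
    proof -
      have q0: "q^(n-N) \<ge> 0" using G0 by (simp add: q_def)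
      show ?thesis using Ua0 q0 C0 by (simp add: ennreal_mult ennreal_plus)
    qed
    finally have up: "I \<le> ennreal (Ua + q^(n-N) * C)" .
    have fin: "I < top" using up by (simp add: le_less_trans)
    have "L \<le> enn2real I" using enn2real_mono[OF low fin] L0 by simp
    moreover have "enn2real I \<le> Ua + q^(n-N) * C"
    proof -
      have "0 \<le> Ua + q^(n-N) * C" using C0 G0 Ua0 by (simp add: q_def)
      then show ?thesis using enn2real_mono[OF up] by (simp del: ennreal_plus)
    qed
    ultimately show ?thesis using Ua unfolding I_def L_def by linarith
  qed
  then show ?thesis using that[OF C0] unfolding N_def q_def by blast
qed

lemma n_q_pow_lim:
  fixes q :: real and N :: nat
  assumes "0 \<le> q" "q < 1"
  shows "(\<lambda>n. (real n + 1) * q ^ (n - N)) \<longlonglongrightarrow> 0"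
proof (cases "q = 0")
  case True
  have "eventually (\<lambda>n. 0 = (real n + 1) * q ^ (n - N)) sequentially"
    using eventually_gt_at_top[of N]
  proof eventually_elim
    case (elim n)
    then have "n - N \<noteq> 0" by simp
    then show ?case using \<open>q = 0\<close> by simp
  qed
  then show ?thesis by (rule Lim_transform_eventually[OF tendsto_const])
next
  case False
  have "(\<lambda>n. (real n * q ^ n + q ^ n) / q ^ N) \<longlonglongrightarrow> (0 + 0) / q ^ N"
    using assms False by (intro tendsto_intros powser_times_n_limit_0) auto
  moreover have "eventually (\<lambda>n. (real n * q ^ n + q ^ n) / q ^ N = (real n + 1) * q ^ (n - N)) sequentially"
    using eventually_ge_at_top[of N]
    by eventually_elim (use False in \<open>simp add: power_diff field_simps\<close>)
  ultimately show ?thesis by (simp add: Lim_transform_eventually)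
qed

lemma integral_bounds_near0:
  fixes f :: "real \<Rightarrow> real"
  assumes d: "\<delta> > 0" and cont: "continuous_on {0..<\<delta>} f" and e: "\<epsilon> > 0"
  obtains \<eta> where "\<eta> > 0" "\<eta> < \<delta>"
    "\<And>t. 0 \<le> t \<Longrightarrow> t \<le> \<eta> \<Longrightarrow> (f 0 - \<epsilon>) * t \<le> integral {0..t} f \<and> integral {0..t} f \<le> (f 0 + \<epsilon>) * t"
proof -
  have "0 \<in> {0..<\<delta>}" using d by simp
  then obtain r where r: "r > 0" "\<And>x'. x' \<in> {0..<\<delta>} \<Longrightarrow> dist x' 0 < r \<Longrightarrow> dist (f x') (f 0) < \<epsilon>"
    using cont e unfolding continuous_on_iff by metis
  define \<eta> where "\<eta> = min (r/2) (\<delta>/2)"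
  have \<eta>: "\<eta> > 0" "\<eta> < \<delta>" "\<eta> < r" using r d by (auto simp: \<eta>_def)
  have "(f 0 - \<epsilon>) * t \<le> integral {0..t} f \<and> integral {0..t} f \<le> (f 0 + \<epsilon>) * t"
    if t: "0 \<le> t" "t \<le> \<eta>" for t
  proof -
    have sub: "{0..t} \<subseteq> {0..<\<delta>}" using t \<eta> by auto
    have int: "f integrable_on {0..t}"
      by (rule integrable_continuous_interval) (rule continuous_on_subset[OF cont sub])
    have close: "\<bar>f s - f 0\<bar> < \<epsilon>" if "s \<in> {0..t}" for s
      using r(2)[of s] that sub \<eta> t by (auto simp: dist_real_def)
    have "integral {0..t} (\<lambda>_. f 0 - \<epsilon>) \<le> integral {0..t} f"
      using close by (intro integral_le int) (fastforce simp: abs_less_iff)+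
    moreover have "integral {0..t} f \<le> integral {0..t} (\<lambda>_. f 0 + \<epsilon>)"
      using close by (intro integral_le int) (fastforce simp: abs_less_iff)+
    ultimately show ?thesis using t by (simp add: mult.commute)
  qed
  then show ?thesis using that \<eta> by blast
qed

lemma f0_pos:
  fixes f G :: "real \<Rightarrow> real"
  assumes d: "\<delta> > 0" and cont: "continuous_on {0..<\<delta>} f" and nz: "f 0 \<noteq> 0"
    and G1: "\<And>t. G t \<le> 1" and GI: "\<And>t. t \<in> {0..<\<delta>} \<Longrightarrow> G t = 1 - integral {0..t} f"
  shows "f 0 > 0"
proof (rule ccontr)
  assume "\<not> f 0 > 0"
  then have neg: "f 0 < 0" using nz by simp
  obtain \<eta> where \<eta>: "\<eta> > 0" "\<eta> < \<delta>"
    "\<And>t. 0 \<le> t \<Longrightarrow> t \<le> \<eta> \<Longrightarrow> (f 0 - (- f 0 / 2)) * t \<le> integral {0..t} f \<and> integral {0..t} f \<le> (f 0 + (- f 0 / 2)) * t"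
    using integral_bounds_near0[OF d cont, of "- f 0 / 2"] neg by auto
  have "integral {0..\<eta>} f \<le> (f 0 / 2) * \<eta>" using \<eta>(3)[of \<eta>] \<eta> by simp
  also have "\<dots> < 0" using neg \<eta> by (simp add: mult_neg_pos)
  finally have "G \<eta> > 1" using GI[of \<eta>] \<eta> by simp
  then show False using G1[of \<eta>] by simp
qed

lemma main_limit:
  fixes G f :: "real \<Rightarrow> real"
  assumes Gm[measurable]: "G \<in> borel_measurable borel"
    and G0: "\<And>t. 0 \<le> G t" and G1: "\<And>t. G t \<le> 1" and Gmono: "\<And>s t. s \<le> t \<Longrightarrow> G t \<le> G s"
    and p: "p > 0" and Lp: "(\<lambda>t. G t powr p) integrable_on {0..}"
    and d: "\<delta> > 0" and cont: "continuous_on {0..<\<delta>} f" and nz: "f 0 \<noteq> 0"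
    and GI: "\<And>t. t \<in> {0..<\<delta>} \<Longrightarrow> G t = 1 - integral {0..t} f"
  shows "(\<lambda>n. (real n + 1) * enn2real (\<integral>\<^sup>+t. indicator {0..} t * ennreal (G t ^ n) \<partial>lborel)) \<longlonglongrightarrow> 1 / f 0"
proof (rule tendstoI)
  fix e :: real assume e: "e > 0"
  have f0: "f 0 > 0" by (rule f0_pos[OF d cont nz G1 GI])
  have ev: "eventually (\<lambda>\<epsilon>. 0 < \<epsilon> \<and> \<epsilon> < f 0 / 2 \<and> 1/(f 0 - \<epsilon>) < 1/f 0 + e/2 \<and> 1/f 0 - e/2 < 1/(f 0 + \<epsilon>)) (at_right 0)"
  proof (intro eventually_conj)
    show "eventually (\<lambda>\<epsilon>::real. 0 < \<epsilon>) (at_right 0)" by (rule eventually_at_right_less)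
    have "((\<lambda>x::real. x) \<longlongrightarrow> 0) (at_right 0)" by (rule tendsto_ident_at)
    then show "eventually (\<lambda>\<epsilon>::real. \<epsilon> < f 0 / 2) (at_right 0)" using f0 by (intro order_tendstoD(2)) auto
    have "((\<lambda>\<epsilon>::real. 1/(f 0 - \<epsilon>)) \<longlongrightarrow> 1/(f 0 - 0)) (at_right 0)"
      using f0 by (intro tendsto_intros) auto
    then show "eventually (\<lambda>\<epsilon>::real. 1/(f 0 - \<epsilon>) < 1/f 0 + e/2) (at_right 0)"
      using e by (intro order_tendstoD(2)) auto
    have "((\<lambda>\<epsilon>::real. 1/(f 0 + \<epsilon>)) \<longlongrightarrow> 1/(f 0 + 0)) (at_right 0)"
      using f0 by (intro tendsto_intros) auto
    then show "eventually (\<lambda>\<epsilon>::real. 1/f 0 - e/2 < 1/(f 0 + \<epsilon>)) (at_right 0)"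
      using e by (intro order_tendstoD(1)) auto
  qed
  then obtain \<epsilon> where eps: "0 < \<epsilon>" "\<epsilon> < f 0 / 2" "1/(f 0 - \<epsilon>) < 1/f 0 + e/2" "1/f 0 - e/2 < 1/(f 0 + \<epsilon>)"
    using eventually_happens'[of "at_right (0::real)"] by auto
  define a where "a = f 0 - \<epsilon>"
  define b where "b = f 0 + \<epsilon>"
  have a: "0 < a" "a \<le> b" using eps f0 by (auto simp: a_def b_def)
  have b: "b > 0" using a by simp
  obtain \<eta>0 where \<eta>0: "\<eta>0 > 0" "\<eta>0 < \<delta>"
    "\<And>t. 0 \<le> t \<Longrightarrow> t \<le> \<eta>0 \<Longrightarrow> (f 0 - \<epsilon>) * t \<le> integral {0..t} f \<and> integral {0..t} f \<le> (f 0 + \<epsilon>) * t"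
    using integral_bounds_near0[OF d cont eps(1)] by blast
  define \<eta> where "\<eta> = min \<eta>0 (1/b)"
  have \<eta>: "\<eta> > 0" "b * \<eta> \<le> 1" "\<eta> \<le> \<eta>0" using \<eta>0 b by (auto simp: \<eta>_def min_def field_simps)
  have Gb: "1 - b*t \<le> G t \<and> G t \<le> 1 - a*t" if "0 \<le> t" "t \<le> \<eta>" for t
    using GI[of t] \<eta>0(3)[of t] that \<eta> \<eta>0 by (auto simp: a_def b_def)
  obtain C where C: "C \<ge> 0" "\<And>n. n \<ge> nat \<lceil>p\<rceil> \<Longrightarrow>
      (1 - (1-b*\<eta>)^(n+1))/(b*(real n+1)) \<le> enn2real (\<integral>\<^sup>+t. indicator {0..} t * ennreal (G t ^ n) \<partial>lborel)
      \<and> enn2real (\<integral>\<^sup>+t. indicator {0..} t * ennreal (G t ^ n) \<partial>lborel) \<le> 1/(a*(real n+1)) + G \<eta> ^ (n - nat \<lceil>p\<rceil>) * C"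
    using bounds[OF Gm G0 G1 Gmono p Lp a \<eta>(1,2) Gb] by blast
  define N where "N = nat \<lceil>p\<rceil>"
  define q where "q = G \<eta>"
  define r where "r = 1 - b * \<eta>"
  have r: "0 \<le> r" "r < 1" using \<eta> b by (auto simp: r_def)
  have "a * \<eta> > 0" using a \<eta> by simp
  then have q: "0 \<le> q" "q < 1" using G0 Gb[of \<eta>] \<eta> by (auto simp: q_def)
  have "(\<lambda>n. (1 - r * r^n) / b) \<longlonglongrightarrow> (1 - r * 0) / b"
    using r b by (intro tendsto_intros LIMSEQ_power_zero) auto
  then have ev1: "eventually (\<lambda>n. 1/f 0 - e < (1 - r * r^n) / b) sequentially"
    using eps(4) e by (intro order_tendstoD(1)) (auto simp: b_def)
  have "(\<lambda>n. 1/a + (real n + 1) * q ^ (n - N) * C) \<longlonglongrightarrow> 1/a + 0 * C"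
    using q by (intro tendsto_intros n_q_pow_lim)
  then have ev2: "eventually (\<lambda>n. 1/a + (real n + 1) * q ^ (n - N) * C < 1/f 0 + e) sequentially"
    using eps(3) e by (intro order_tendstoD(2)) (auto simp: a_def)
  show "eventually (\<lambda>n. dist ((real n + 1) * enn2real (\<integral>\<^sup>+t. indicator {0..} t * ennreal (G t ^ n) \<partial>lborel)) (1 / f 0) < e) sequentially"
    using ev1 ev2 eventually_ge_at_top[of N]
  proof eventually_elim
    case (elim n)
    define E where "E = enn2real (\<integral>\<^sup>+t. indicator {0..} t * ennreal (G t ^ n) \<partial>lborel)"
    have B: "(1 - r^(n+1))/(b*(real n+1)) \<le> E" "E \<le> 1/(a*(real n+1)) + q ^ (n - N) * C"
      using C(2)[of n] elim by (auto simp: E_def r_def q_def N_def)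
    have pos: "real n + 1 > 0" by simp
    have "(real n + 1) * ((1 - r^(n+1))/(b*(real n+1))) \<le> (real n + 1) * E"
      using B(1) pos by (intro mult_left_mono) auto
    moreover have "(real n + 1) * ((1 - r^(n+1))/(b*(real n+1))) = (1 - r * r^n) / b"
    proof -
      have "b*(real n+1) \<noteq> 0" using pos b by simp
      then show ?thesis using b by (simp add: field_simps)
    qed
    moreover have "(real n + 1) * E \<le> (real n + 1) * (1/(a*(real n+1)) + q ^ (n - N) * C)"
      using B(2) pos by (intro mult_left_mono) auto
    moreover have "(real n + 1) * (1/(a*(real n+1)) + q ^ (n - N) * C) = 1/a + (real n + 1) * q ^ (n - N) * C"
    proof -
      have "a*(real n+1) \<noteq> 0" using pos a by simp
      then show ?thesis using a by (simp add: field_simps)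
    qed
    ultimately show ?case using elim unfolding E_def dist_real_def by (simp add: abs_less_iff)
  qed
qed


theorem theorem3:
  fixes M :: "'a measure" and X :: "nat \<Rightarrow> 'a \<Rightarrow> real"
    and F f :: "real \<Rightarrow> real"
  assumes "prob_space M"
    and meas: "\<And>i. X i \<in> borel_measurable M"
    and indep: "prob_space.indep_vars M (\<lambda>_. borel) X UNIV"
    and ident: "\<And>i. distr M borel (X i) = distr M borel (X 0)"
    and nonneg: "\<And>i x. x \<in> space M \<Longrightarrow> X i x \<ge> 0"
    and F_def: "F = cdf (distr M borel (X 0))"
    and dens: "\<exists>\<delta>>0. continuous_on {0..<\<delta>} f \<and> (\<forall>t\<in>{0..<\<delta>}. f t \<noteq> 0)
                  \<and> (\<forall>t\<in>{0..<\<delta>}. F t = integral {0..t} f)"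
    and Lp: "\<exists>p>0. (\<lambda>t. (1 - F t) powr p) integrable_on {0..}"
  shows "(\<lambda>n. prob_space.expectation M (\<lambda>x. Min ((\<lambda>i. X i x) ` {1..n})))
           \<sim>[at_top] (\<lambda>n. 1 / (f 0 * (real n + 1)))"
proof -
  interpret P: prob_space M by fact
  note meas[measurable]
  define F0 where "F0 = distr M borel (X 0)"
  interpret F0: real_distribution F0 unfolding F0_def by (rule P.real_distribution_distr) simp
  define G where "G t = 1 - F t" for t
  have Fm: "F \<in> borel_measurable borel"
    unfolding F_def by (rule borel_measurable_mono) (auto simp: mono_def F0.cdf_nondecreasing[unfolded F0_def])
  have Gm: "G \<in> borel_measurable borel" unfolding G_def using Fm by measurable
  have G0: "\<And>t. 0 \<le> G t" unfolding G_def F_def using F0.cdf_bounded_prob by (simp add: F0_def)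
  have G1: "\<And>t. G t \<le> 1" unfolding G_def F_def using F0.cdf_nonneg by (simp add: F0_def)
  have Gmono: "\<And>s t. s \<le> t \<Longrightarrow> G t \<le> G s" unfolding G_def F_def
    using F0.cdf_nondecreasing by (simp add: F0_def)
  obtain \<delta> where d: "\<delta> > 0" and cont: "continuous_on {0..<\<delta>} f" and nzall: "\<forall>t\<in>{0..<\<delta>}. f t \<noteq> 0"
    and FI: "\<forall>t\<in>{0..<\<delta>}. F t = integral {0..t} f" using dens by blast
  have nz: "f 0 \<noteq> 0" using nzall d by auto
  have GI: "\<And>t. t \<in> {0..<\<delta>} \<Longrightarrow> G t = 1 - integral {0..t} f" using FI by (simp add: G_def)
  obtain p where p: "p > 0" and Lp': "(\<lambda>t. G t powr p) integrable_on {0..}" using Lp by (auto simp: G_def)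
  have f0: "f 0 > 0" by (rule f0_pos[OF d cont nz G1 GI])
  define I where "I n = enn2real (\<integral>\<^sup>+t. indicator {0..} t * ennreal (G t ^ n) \<partial>lborel)" for n
  have lim: "(\<lambda>n. (real n + 1) * I n) \<longlonglongrightarrow> 1 / f 0"
    unfolding I_def by (rule main_limit[OF Gm G0 G1 Gmono p Lp' d cont nz GI])
  define Y where "Y n x = Min ((\<lambda>i. X i x) ` {1..n})" for n x
  have EY: "P.expectation (Y n) = I n" if n: "n \<ge> 1" for n
  proof -
    have Ym[measurable]: "Y n \<in> borel_measurable M" unfolding Y_def by measurable
    have Y0: "0 \<le> Y n x" if "x \<in> space M" for x
      unfolding Y_def using n nonneg[OF that] by (subst Min_ge_iff) auto
    have "P.expectation (Y n) = enn2real (\<integral>\<^sup>+x. ennreal (Y n x) \<partial>M)"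
      by (rule integral_eq_nn_integral) (use Y0 in auto)
    also have "(\<integral>\<^sup>+x. ennreal (Y n x) \<partial>M) = (\<integral>\<^sup>+t. indicator {0..} t * emeasure M {x\<in>space M. t < Y n x} \<partial>lborel)"
      by (rule layer_cake[OF _ Ym Y0]) (rule P.sigma_finite_measure_axioms)
    also have "\<dots> = (\<integral>\<^sup>+t. indicator {0..} t * ennreal (G t ^ n) \<partial>lborel)"
    proof (rule nn_integral_cong)
      fix t :: real
      have set: "{x\<in>space M. t < Y n x} = (\<Inter>i\<in>{1..n}. X i -` {t<..} \<inter> space M)"
        using n by (auto simp: Y_def)
      have pi: "P.prob (X i -` {t<..} \<inter> space M) = G t" for i
      proof -
        have "P.prob (X i -` {t<..} \<inter> space M) = measure (distr M borel (X i)) {t<..}"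
          by (rule measure_distr[symmetric]) auto
        also have "\<dots> = measure F0 (space F0 - {..t})"
          using ident[of i] by (simp add: F0_def[symmetric] Compl_eq_Diff_UNIV[symmetric] Compl_atMost)
        also have "\<dots> = 1 - F t" by (subst F0.prob_compl) (auto simp: F_def F0_def cdf_def)
        finally show ?thesis by (simp add: G_def)
      qed
      have "P.prob {x\<in>space M. t < Y n x} = (\<Prod>i\<in>{1..n}. P.prob (X i -` {t<..} \<inter> space M))"
        unfolding set using n by (intro P.indep_varsD[OF indep]) auto
      also have "\<dots> = G t ^ n" by (simp add: pi)
      finally have "emeasure M {x\<in>space M. t < Y n x} = ennreal (G t ^ n)"
        by (simp add: P.emeasure_eq_measure)
      then show "indicator {0..} t * emeasure M {x\<in>space M. t < Y n x} = indicator {0..} t * ennreal (G t ^ n)"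
        by simp
    qed
    finally show ?thesis unfolding I_def .
  qed
  have "(\<lambda>n. f 0 * ((real n + 1) * I n)) \<longlonglongrightarrow> f 0 * (1 / f 0)"
    by (intro tendsto_mult tendsto_const lim)
  then have "(\<lambda>n. f 0 * ((real n + 1) * I n)) \<longlonglongrightarrow> 1" using f0 by simp
  moreover have "eventually (\<lambda>n. f 0 * ((real n + 1) * I n) = P.expectation (Y n) / (1 / (f 0 * (real n + 1)))) sequentially"
    using eventually_ge_at_top[of 1] by eventually_elim (simp add: EY)
  ultimately have "(\<lambda>n. P.expectation (Y n) / (1 / (f 0 * (real n + 1)))) \<longlonglongrightarrow> 1"
    by (rule Lim_transform_eventually)
  then show ?thesis unfolding Y_def by (rule asymp_equivI')
qed

end
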